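(* Let $\mathcal{N}=\{1,\dots,N\}$, $K\ge1$, $M\ge0$, and let $\underline{\mathsf{d}}$ be uniformly distributed over $\mathcal{N}^K$. For any $s\in\{1,2,\dots,\min\{N,K\}\}$, \[ \bar{R}(M,\mathcal{N},K)\ge \Pr\bigl(w(\underline{\mathsf{d}})\ge s\bigr)\,\bar{R}_s(M,\mathcal{N},s). \]
   Context: Caching problem: a server holds $N$ files of $F$ bits each, connected through a shared error-free link to $K$ users each with a cache of $MF$ bits. In the placement phase each user stores an arbitrary function of the files of at most $MF$ bits; in the delivery phase the users' demand vector $\underline{d}\in\mathcal{N}^K$ is revealed, the server sends a message over the shared link, and each user must reconstruct its requested file from the message and its cache. The rate is message length divided by $F$. $\bar{R}(M,\mathcal{N},K)$ is the optimal expected rate (infimum over all schemes of the expected rate, achievable with vanishing error probability for all large $F$) when the demand vector is uniform over $\mathcal{N}^K$. For a vector $\underline{d}$, $w(\underline{d})$ is the number of distinct entries of $\underline{d}$. For $s\in\{1,\dots,\min\{N,K\}\}$, $\bar{R}_s(M,\mathcal{N},K)$ is the optimal expected rate when the demand vector is uniform over $\mathcal{N}^K$ conditioned on $w(\underline{d})=s$ (both placement and delivery optimized for this conditional distribution). In particular, $\bar{R}_s(M,\mathcal{N},s)$ is the optimal expected rate for $s$ users requesting files chosen uniformly at random from $\mathcal{N}$ without replacement. *)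

theory Defs
  imports Main "HOL-Library.FuncSet" Complex_Main
begin

(* Files are indexed by the elements of a finite set Ns (the paper's \<N>);
   users are indexed by {..<K}. A file is a bit string (bool list) of length F. *)

definition files_space :: "nat set \<Rightarrow> nat \<Rightarrow> (nat \<Rightarrow> bool list) set" where
  "files_space Ns F = PiE Ns (\<lambda>_. {xs. length xs = F})"

definition demands :: "nat set \<Rightarrow> nat \<Rightarrow> (nat \<Rightarrow> nat) set" where
  "demands Ns K = PiE {..<K} (\<lambda>_. Ns)"

definition nd :: "nat \<Rightarrow> (nat \<Rightarrow> nat) \<Rightarrow> nat" where
  "nd K d = card (d ` {..<K})"

(* error probability for demand d, files uniform i.i.d. over {0,1}^F:
   probability that some user k decodes incorrectly *)
definition error_prob ::
  "nat set \<Rightarrow> nat \<Rightarrow> nat \<Rightarrow> (nat \<Rightarrow> (nat \<Rightarrow> bool list) \<Rightarrow> bool list)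
   \<Rightarrow> ((nat \<Rightarrow> nat) \<Rightarrow> (nat \<Rightarrow> bool list) \<Rightarrow> bool list)
   \<Rightarrow> (nat \<Rightarrow> (nat \<Rightarrow> nat) \<Rightarrow> bool list \<Rightarrow> bool list \<Rightarrow> bool list)
   \<Rightarrow> (nat \<Rightarrow> nat) \<Rightarrow> real" where
  "error_prob Ns K F \<phi> \<psi> \<mu> d =
     real (card {W \<in> files_space Ns F. \<exists>k<K. \<mu> k d (\<psi> d W) (\<phi> k W) \<noteq> W (d k)})
     / real (card (files_space Ns F))"

(* A caching scheme for file size F bits, cache size M (normalised), demand set D
   (the demand vector is uniform over D):
   \<phi> k W  = cache content of user k (at most M*F bits),
   \<psi> d W  = broadcast message for demand d (at most L d bits),
   \<mu> k d X Z = decoded file of user k from message X and cache Z. *)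
definition good_scheme ::
  "real \<Rightarrow> nat set \<Rightarrow> nat \<Rightarrow> (nat \<Rightarrow> nat) set \<Rightarrow> nat
   \<Rightarrow> (nat \<Rightarrow> (nat \<Rightarrow> bool list) \<Rightarrow> bool list)
   \<Rightarrow> ((nat \<Rightarrow> nat) \<Rightarrow> (nat \<Rightarrow> bool list) \<Rightarrow> bool list)
   \<Rightarrow> ((nat \<Rightarrow> nat) \<Rightarrow> nat)
   \<Rightarrow> (nat \<Rightarrow> (nat \<Rightarrow> nat) \<Rightarrow> bool list \<Rightarrow> bool list \<Rightarrow> bool list)
   \<Rightarrow> real \<Rightarrow> real \<Rightarrow> bool" where
  "good_scheme M Ns K D F \<phi> \<psi> L \<mu> eps R \<longleftrightarrow>
     (\<forall>k<K. \<forall>W\<in>files_space Ns F. real (length (\<phi> k W)) \<le> M * real F) \<and>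
     (\<forall>d\<in>D. \<forall>W\<in>files_space Ns F. length (\<psi> d W) \<le> L d) \<and>
     (\<forall>d\<in>D. error_prob Ns K F \<phi> \<psi> \<mu> d \<le> eps) \<and>
     (\<Sum>d\<in>D. real (L d) / real F) / real (card D) \<le> R"

definition achievable :: "real \<Rightarrow> nat set \<Rightarrow> nat \<Rightarrow> (nat \<Rightarrow> nat) set \<Rightarrow> real \<Rightarrow> bool" where
  "achievable M Ns K D R \<longleftrightarrow>
     (\<forall>eps>0. \<exists>F0. \<forall>F\<ge>F0. \<exists>\<phi> \<psi> L \<mu>. good_scheme M Ns K D F \<phi> \<psi> L \<mu> eps (R + eps))"

definition opt_rate :: "real \<Rightarrow> nat set \<Rightarrow> nat \<Rightarrow> (nat \<Rightarrow> nat) set \<Rightarrow> real" where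
  "opt_rate M Ns K D = Inf {R. achievable M Ns K D R}"

definition Rbar :: "real \<Rightarrow> nat set \<Rightarrow> nat \<Rightarrow> real" where
  "Rbar M Ns K = opt_rate M Ns K (demands Ns K)"

definition Rbar_s :: "real \<Rightarrow> nat set \<Rightarrow> nat \<Rightarrow> nat \<Rightarrow> real" where
  "Rbar_s M Ns K s = opt_rate M Ns K {d \<in> demands Ns K. nd K d = s}"

end

theory Submission
  imports Defs
begin

definition Injs :: "nat \<Rightarrow> nat \<Rightarrow> (nat \<Rightarrow> nat) set" where
  "Injs s K = {\<sigma> \<in> {..<s} \<rightarrow>\<^sub>E {..<K}. inj_on \<sigma> {..<s}}"
definition hres :: "nat \<Rightarrow> (nat \<Rightarrow> nat) \<Rightarrow> (nat \<Rightarrow> nat) \<Rightarrow> (nat \<Rightarrow> nat)" where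
  "hres s \<sigma> d = (\<lambda>j\<in>{..<s}. d (\<sigma> j))"
definition mlt :: "nat \<Rightarrow> nat \<Rightarrow> (nat \<Rightarrow> nat) \<Rightarrow> nat" where
  "mlt s K d = card {\<sigma> \<in> Injs s K. inj_on (hres s \<sigma> d) {..<s}}"
definition Es :: "nat set \<Rightarrow> nat \<Rightarrow> (nat \<Rightarrow> nat) set" where
  "Es Ns s = {e \<in> demands Ns s. inj_on e {..<s}}"
definition Asig :: "nat set \<Rightarrow> nat \<Rightarrow> nat \<Rightarrow> (nat \<Rightarrow> nat) \<Rightarrow> (nat \<Rightarrow> nat) set" where
  "Asig Ns s K \<sigma> = {d \<in> demands Ns K. inj_on (hres s \<sigma> d) {..<s}}"

lemma ext_inj:
  assumes fin: "finite Ns" and ie: "inj_on e {..<(s::nat)}" and ie': "inj_on e' {..<s}"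
    and se: "e ` {..<s} \<subseteq> Ns" and se': "e' ` {..<s} \<subseteq> Ns"
  shows "\<exists>\<pi>. inj_on \<pi> Ns \<and> \<pi> ` Ns \<subseteq> Ns \<and> (\<forall>j<s. \<pi> (e j) = e' j)"
proof -
  let ?A = "e ` {..<s}" let ?B = "e' ` {..<s}"
  have cA: "card ?A = s" using card_image[OF ie] by simp
  have cB: "card ?B = s" using card_image[OF ie'] by simp
  have "card (Ns - ?A) = card (Ns - ?B)"
    using card_Diff_subset[OF _ se] card_Diff_subset[OF _ se'] cA cB fin
    by (metis finite_imageI finite_lessThan)
  then obtain h where h: "bij_betw h (Ns - ?A) (Ns - ?B)"
    using finite_same_card_bij fin by (metis finite_Diff)
  define \<pi> where "\<pi> x = (if x \<in> ?A then e' (inv_into {..<s} e x) else h x)" for x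
  have p1: "\<pi> (e j) = e' j" if "j < s" for j
    using that ie by (simp add: \<pi>_def inv_into_f_f)
  have "inj_on \<pi> Ns"
  proof (rule inj_onI)
    fix x y assume x: "x \<in> Ns" and y: "y \<in> Ns" and eq: "\<pi> x = \<pi> y"
    show "x = y"
    proof (cases "x \<in> ?A")
      case True
      then obtain i where i: "i < s" "x = e i" by auto
      show ?thesis
      proof (cases "y \<in> ?A")
        case True
        then obtain j where j: "j < s" "y = e j" by auto
        have "e' i = e' j" using eq p1 i j by simp
        then show ?thesis using ie' i j by (metis inj_onD lessThan_iff)
      next
        case False
        have "\<pi> y \<in> Ns - ?B" using False y h by (auto simp: \<pi>_def bij_betw_def)
        moreover have "\<pi> x \<in> ?B" using p1 i by auto
        ultimately show ?thesis using eq by auto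
      qed
    next
      case False
      show ?thesis
      proof (cases "y \<in> ?A")
        case True
        then obtain j where j: "j < s" "y = e j" by auto
        have "\<pi> x \<in> Ns - ?B" using False x h by (auto simp: \<pi>_def bij_betw_def)
        moreover have "\<pi> y \<in> ?B" using p1 j by auto
        ultimately show ?thesis using eq by auto
      next
        case F2: False
        have "h x = h y" using eq False F2 by (simp add: \<pi>_def)
        then show ?thesis using h x y False F2 by (auto simp: bij_betw_def inj_on_def)
      qed
    qed
  qed
  moreover have "\<pi> ` Ns \<subseteq> Ns"
  proof
    fix z assume "z \<in> \<pi> ` Ns"
    then obtain x where x: "x \<in> Ns" "z = \<pi> x" by auto
    show "z \<in> Ns"
    proof (cases "x \<in> ?A")
      case True
      then obtain i where "i < s" "x = e i" by auto
      then show ?thesis using p1 se' x by auto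
    next
      case False
      then show ?thesis using h x by (auto simp: \<pi>_def bij_betw_def)
    qed
  qed
  ultimately show ?thesis using p1 by blast
qed

lemma inj_comp_iff:
  assumes "inj_on \<pi> Ns" "f ` A \<subseteq> Ns"
  shows "inj_on (\<lambda>x. \<pi> (f x)) A \<longleftrightarrow> inj_on f A"
  using assms unfolding inj_on_def by (metis image_subset_iff)

lemma nd_inj:
  assumes d: "d \<in> demands Ns K" and nd: "nd K d \<ge> s"
  shows "\<exists>\<sigma>\<in>Injs s K. inj_on (hres s \<sigma> d) {..<s}"
proof -
  let ?T = "d ` {..<K}"
  obtain T' where T': "T' \<subseteq> ?T" "card T' = s" "finite T'"
    using nd obtain_subset_with_card_n unfolding nd_def by metis
  obtain f where f: "bij_betw f {0..<s} T'" using ex_bij_betw_nat_finite[OF T'(3)] T'(2) by auto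
  define \<sigma> where "\<sigma> = (\<lambda>j\<in>{..<s}. inv_into {..<K} d (f j))"
  have fj: "f j \<in> ?T" if "j < s" for j using f T'(1) that by (auto simp: bij_betw_def)
  have ds: "d (\<sigma> j) = f j" if "j < s" for j
    using fj[OF that] that by (simp add: \<sigma>_def f_inv_into_f)
  have sK: "\<sigma> j < K" if "j < s" for j
    using fj[OF that] that inv_into_into[of "f j" d "{..<K}"] by (simp add: \<sigma>_def)
  have "\<sigma> \<in> {..<s} \<rightarrow>\<^sub>E {..<K}" using sK by (auto simp: \<sigma>_def)
  moreover have fi: "inj_on f {..<s}" using f by (auto simp: bij_betw_def atLeast0LessThan)
  have "inj_on \<sigma> {..<s}"
    by (rule inj_onI) (metis ds fi inj_onD lessThan_iff)
  moreover have "inj_on (hres s \<sigma> d) {..<s}"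
    using fi ds unfolding hres_def inj_on_def by auto
  ultimately show ?thesis unfolding Injs_def by blast
qed

lemma take_drop_concat:
  "(\<forall>x\<in>set xs. length x = F) \<Longrightarrow> k < length xs \<Longrightarrow> take F (drop (k*F) (concat xs)) = xs ! k"
proof (induction xs arbitrary: k)
  case Nil then show ?case by simp
next
  case (Cons x xs)
  show ?case
  proof (cases k)
    case 0 then show ?thesis using Cons by simp
  next
    case (Suc k')
    have "drop (k*F) (concat (x#xs)) = drop (k'*F) (concat xs)"
      using Cons.prems Suc by (simp add: add.commute)
    then show ?thesis using Cons Suc by simp
  qed
qed



lemma fin_dem: "finite Ns \<Longrightarrow> finite (demands Ns K)"
  unfolding demands_def by (simp add: finite_PiE)

lemma fin_Injs: "finite (Injs s K)"
  unfolding Injs_def by (rule finite_subset[of _ "{..<s} \<rightarrow>\<^sub>E {..<K}"]) (auto simp: finite_PiE)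

lemma hres_dem:
  assumes "\<sigma> \<in> Injs s K" "d \<in> demands Ns K"
  shows "hres s \<sigma> d \<in> demands Ns s"
  using assms unfolding Injs_def demands_def hres_def by (auto simp: PiE_iff)

lemma sym_le:
  assumes fin: "finite Ns" and \<sigma>: "\<sigma> \<in> Injs s K" and e: "e \<in> Es Ns s" and e': "e' \<in> Es Ns s"
  shows "(\<Sum>d\<in>{d\<in>Asig Ns s K \<sigma>. hres s \<sigma> d = e}. 1 / real (mlt s K d))
       \<le> (\<Sum>d\<in>{d\<in>Asig Ns s K \<sigma>. hres s \<sigma> d = e'}. 1 / real (mlt s K d))"
proof -
  have ie: "inj_on e {..<s}" and se: "e ` {..<s} \<subseteq> Ns"
    using e unfolding Es_def demands_def by (auto simp: PiE_iff)
  have ie': "inj_on e' {..<s}" and se': "e' ` {..<s} \<subseteq> Ns" and ee': "e' \<in> {..<s} \<rightarrow>\<^sub>E Ns"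
    using e' unfolding Es_def demands_def by (auto simp: PiE_iff)
  obtain \<pi> where \<pi>: "inj_on \<pi> Ns" "\<pi> ` Ns \<subseteq> Ns" "\<forall>j<s. \<pi> (e j) = e' j"
    using ext_inj[OF fin ie ie' se se'] by blast
  define T where "T d = (\<lambda>k\<in>{..<K}. \<pi> (d k))" for d :: "nat \<Rightarrow> nat"
  let ?F = "{d\<in>Asig Ns s K \<sigma>. hres s \<sigma> d = e}"
  let ?F' = "{d\<in>Asig Ns s K \<sigma>. hres s \<sigma> d = e'}"
  have sK: "\<sigma> j < K" if "j < s" for j using \<sigma> that unfolding Injs_def by auto
  have Td: "T d \<in> demands Ns K" if "d \<in> demands Ns K" for d
    using that \<pi>(2) unfolding T_def demands_def by (auto simp: PiE_iff)
  have mT: "mlt s K (T d) = mlt s K d" if d: "d \<in> demands Ns K" for d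
  proof -
    have "inj_on (hres s \<sigma>' (T d)) {..<s} \<longleftrightarrow> inj_on (hres s \<sigma>' d) {..<s}" if "\<sigma>' \<in> Injs s K" for \<sigma>'
    proof -
      have s': "\<sigma>' j < K" if "j < s" for j using \<open>\<sigma>' \<in> Injs s K\<close> that unfolding Injs_def by auto
      have "inj_on (hres s \<sigma>' (T d)) {..<s} \<longleftrightarrow> inj_on (\<lambda>j. \<pi> (hres s \<sigma>' d j)) {..<s}"
        by (rule inj_on_cong) (simp add: hres_def T_def s')
      also have "\<dots> \<longleftrightarrow> inj_on (hres s \<sigma>' d) {..<s}"
        by (rule inj_comp_iff[OF \<pi>(1)]) (use hres_dem[OF that d] in \<open>auto simp: demands_def PiE_iff\<close>)
      finally show ?thesis .
    qed
    then show ?thesis unfolding mlt_def by (metis (mono_tags, lifting) mem_Collect_eq Collect_cong)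
  qed
  have hT: "hres s \<sigma> (T d) = e'" if "d \<in> ?F" for d
  proof
    fix j show "hres s \<sigma> (T d) j = e' j"
    proof (cases "j < s")
      case True
      have "d (\<sigma> j) = e j" using that True by (auto simp: hres_def dest: fun_cong[of _ _ j])
      then show ?thesis using True \<pi>(3) sK by (simp add: hres_def T_def)
    next
      case False
      have "e' j = undefined" using PiE_arb[OF ee'] False by simp
      then show ?thesis using False by (simp add: hres_def)
    qed
  qed
  have img: "T ` ?F \<subseteq> ?F'"
  proof
    fix x assume "x \<in> T ` ?F"
    then obtain d where d: "d \<in> ?F" "x = T d" by auto
    then show "x \<in> ?F'" using hT[OF d(1)] Td ie' unfolding Asig_def by auto
  qed
  have inj: "inj_on T ?F"
  proof (rule inj_onI)
    fix x y assume x: "x \<in> ?F" and y: "y \<in> ?F" and eq: "T x = T y"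
    have xd: "x \<in> {..<K} \<rightarrow>\<^sub>E Ns" and yd: "y \<in> {..<K} \<rightarrow>\<^sub>E Ns"
      using x y unfolding Asig_def demands_def by auto
    show "x = y"
    proof
      fix k show "x k = y k"
      proof (cases "k < K")
        case True
        have "\<pi> (x k) = \<pi> (y k)" using eq True unfolding T_def by (metis lessThan_iff restrict_apply')
        moreover have "x k \<in> Ns" "y k \<in> Ns" using xd yd True by auto
        ultimately show ?thesis using \<pi>(1) by (meson inj_onD)
      next
        case False
        have "x k = undefined" "y k = undefined" using PiE_arb[OF xd] PiE_arb[OF yd] False by auto
        then show ?thesis by simp
      qed
    qed
  qed
  have finF': "finite ?F'" using fin_dem[OF fin] unfolding Asig_def by auto
  have "(\<Sum>d\<in>?F. 1 / real (mlt s K d)) = (\<Sum>d\<in>?F. 1 / real (mlt s K (T d)))"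
    by (rule sum.cong) (auto simp: mT Asig_def)
  also have "\<dots> = (\<Sum>d\<in>T ` ?F. 1 / real (mlt s K d))"
    by (simp add: sum.reindex[OF inj])
  also have "\<dots> \<le> (\<Sum>d\<in>?F'. 1 / real (mlt s K d))"
    by (rule sum_mono2[OF finF' img]) auto
  finally show ?thesis .
qed



lemma ex_min_real:
  assumes "finite S" "S \<noteq> {}"
  shows "\<exists>x\<in>S. \<forall>y\<in>S. (f x::real) \<le> f y"
proof -
  have "Min (f ` S) \<in> f ` S" using assms by simp
  then obtain x where "x \<in> S" "f x = Min (f ` S)" by auto
  then show ?thesis using assms by (metis Min_le finite_imageI imageI)
qed

lemma core:
  fixes Lr :: "(nat \<Rightarrow> nat) \<Rightarrow> real"
  assumes fin: "finite Ns" and s1: "1 \<le> s" and sK: "s \<le> K"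
    and e0: "e0 \<in> Es Ns s"
    and Lnn: "\<forall>d\<in>demands Ns K. Lr d \<ge> 0"
    and cpos: "card {d \<in> demands Ns K. nd K d \<ge> s} > 0"
  shows "\<exists>\<sigma>\<in>Injs s K. \<exists>c. (\<forall>e\<in>Es Ns s. c e \<in> demands Ns K \<and> (\<forall>j<s. c e (\<sigma> j) = e j)) \<and>
     (\<Sum>e\<in>Es Ns s. Lr (c e)) / real (card (Es Ns s))
       \<le> (\<Sum>d\<in>demands Ns K. Lr d) / real (card {d \<in> demands Ns K. nd K d \<ge> s})"
proof -
  define D where "D = demands Ns K"
  define I where "I = Injs s K"
  define E where "E = Es Ns s"
  define g where "g d = 1 / real (mlt s K d)" for d
  define fib where "fib \<sigma> e = {d\<in>Asig Ns s K \<sigma>. hres s \<sigma> d = e}" for \<sigma> e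
  define S where "S \<sigma> e = (\<Sum>d\<in>fib \<sigma> e. g d)" for \<sigma> e
  have finD: "finite D" using fin_dem[OF fin] D_def by simp
  have finI: "finite I" using fin_Injs I_def by simp
  have finE: "finite E" unfolding E_def Es_def using fin_dem[OF fin] by auto
  have finA: "finite (Asig Ns s K \<sigma>)" for \<sigma> using finD unfolding Asig_def D_def by auto
  have finfib: "finite (fib \<sigma> e)" for \<sigma> e using finA unfolding fib_def by auto
  have gnn: "g d \<ge> 0" for d unfolding g_def by simp
  have symS: "S \<sigma> e = S \<sigma> e'" if "\<sigma> \<in> I" "e \<in> E" "e' \<in> E" for \<sigma> e e'
    using sym_le[OF fin, of \<sigma> s K e e'] sym_le[OF fin, of \<sigma> s K e' e] that
    unfolding S_def fib_def g_def I_def E_def by linarith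
  have mpos: "mlt s K d > 0" if "\<sigma> \<in> I" "d \<in> Asig Ns s K \<sigma>" for \<sigma> d
  proof -
    have "\<sigma> \<in> {\<sigma> \<in> Injs s K. inj_on (hres s \<sigma> d) {..<s}}" using that unfolding I_def Asig_def by auto
    then show ?thesis unfolding mlt_def using fin_Injs by (metis (no_types, lifting) card_gt_0_iff empty_iff finite_subset mem_Collect_eq subsetI)
  qed
  have fibne: "fib \<sigma> e \<noteq> {}" if \<sigma>: "\<sigma> \<in> I" and e: "e \<in> E" for \<sigma> e
  proof -
    have ee: "e \<in> {..<s} \<rightarrow>\<^sub>E Ns" and ie: "inj_on e {..<s}" using e unfolding E_def Es_def demands_def by auto
    have \<sigma>K: "\<sigma> j < K" if "j < s" for j using \<sigma> that unfolding I_def Injs_def by auto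
    have i\<sigma>: "inj_on \<sigma> {..<s}" using \<sigma> unfolding I_def Injs_def by auto
    define d0 where "d0 = (\<lambda>k\<in>{..<K}. if k \<in> \<sigma> ` {..<s} then e (inv_into {..<s} \<sigma> k) else e 0)"
    have "d0 \<in> D"
    proof -
      have "e (inv_into {..<s} \<sigma> k) \<in> Ns" if "k \<in> \<sigma> ` {..<s}" for k
        by (rule PiE_mem[OF ee]) (rule inv_into_into[OF that])
      moreover have "e 0 \<in> Ns" using s1 by (intro PiE_mem[OF ee]) auto
      ultimately show ?thesis unfolding d0_def D_def demands_def by (simp add: restrict_PiE_iff)
    qed
    moreover have "hres s \<sigma> d0 = e"
    proof
      fix j show "hres s \<sigma> d0 j = e j"
      proof (cases "j < s")
        case True then show ?thesis using \<sigma>K[OF True] i\<sigma> by (simp add: hres_def d0_def inv_into_f_f)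
      next
        case False
        have "e j = undefined" using PiE_arb[OF ee] False by simp
        then show ?thesis using False by (simp add: hres_def)
      qed
    qed
    ultimately have "d0 \<in> fib \<sigma> e" using ie unfolding fib_def Asig_def D_def by auto
    then show ?thesis by auto
  qed
  have Spos: "S \<sigma> e > 0" if asm: "\<sigma> \<in> I" "e \<in> E" for \<sigma> e
  proof -
    obtain d where d: "d \<in> fib \<sigma> e" using fibne[OF asm] by auto
    have "g d > 0" using mpos[OF asm(1)] d unfolding g_def fib_def by auto
    then have "0 < (\<Sum>d\<in>{d}. g d)" by simp
    also have "\<dots> \<le> S \<sigma> e" unfolding S_def by (rule sum_mono2[OF finfib]) (use d gnn in auto)
    finally show ?thesis .
  qed
  have "\<forall>\<sigma>\<in>I. \<forall>e\<in>E. \<exists>d\<in>fib \<sigma> e. \<forall>d'\<in>fib \<sigma> e. Lr d \<le> Lr d'"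
    using ex_min_real[OF finfib fibne] by blast
  then obtain c where c: "\<And>\<sigma> e. \<sigma> \<in> I \<Longrightarrow> e \<in> E \<Longrightarrow> c \<sigma> e \<in> fib \<sigma> e \<and> (\<forall>d'\<in>fib \<sigma> e. Lr (c \<sigma> e) \<le> Lr d')"
    by metis
  have fibD: "fib \<sigma> e \<subseteq> D" for \<sigma> e unfolding fib_def Asig_def D_def by auto
  have ineq1: "Lr (c \<sigma> e) * S \<sigma> e \<le> (\<Sum>d\<in>fib \<sigma> e. g d * Lr d)" if "\<sigma> \<in> I" "e \<in> E" for \<sigma> e
    unfolding S_def sum_distrib_left
  proof (rule sum_mono)
    fix d assume "d \<in> fib \<sigma> e"
    then have "Lr (c \<sigma> e) \<le> Lr d" using c[OF that] by auto
    then have "g d * Lr (c \<sigma> e) \<le> g d * Lr d" using gnn mult_left_mono by blast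
    then show "Lr (c \<sigma> e) * g d \<le> g d * Lr d" by (simp add: mult.commute)
  qed
  define Z where "Z \<sigma> = S \<sigma> e0" for \<sigma>
  define a where "a \<sigma> = (\<Sum>e\<in>E. Lr (c \<sigma> e))" for \<sigma>
  have e0E: "e0 \<in> E" using e0 E_def by simp
  have img: "hres s \<sigma> ` Asig Ns s K \<sigma> \<subseteq> E" if "\<sigma> \<in> I" for \<sigma>
    using hres_dem[of \<sigma> s K] that unfolding Asig_def E_def Es_def I_def by auto
  have grp: "(\<Sum>e\<in>E. \<Sum>d\<in>fib \<sigma> e. h d) = (\<Sum>d\<in>Asig Ns s K \<sigma>. h d)" if "\<sigma> \<in> I" for \<sigma> and h :: "_ \<Rightarrow> real"
    unfolding fib_def using sum.group[OF finA finE img[OF that], of h] by simp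
  have i: "Z \<sigma> * a \<sigma> \<le> (\<Sum>d\<in>Asig Ns s K \<sigma>. g d * Lr d)" if "\<sigma> \<in> I" for \<sigma>
  proof -
    have "Z \<sigma> * a \<sigma> = (\<Sum>e\<in>E. Lr (c \<sigma> e) * S \<sigma> e)"
      unfolding a_def Z_def sum_distrib_left using symS[OF that e0E] by (auto intro!: sum.cong)
    also have "\<dots> \<le> (\<Sum>e\<in>E. \<Sum>d\<in>fib \<sigma> e. g d * Lr d)" by (rule sum_mono) (rule ineq1[OF that])
    also have "\<dots> = (\<Sum>d\<in>Asig Ns s K \<sigma>. g d * Lr d)" by (rule grp[OF that])
    finally show ?thesis .
  qed
  have ii: "Z \<sigma> * real (card E) = (\<Sum>d\<in>Asig Ns s K \<sigma>. g d)" if "\<sigma> \<in> I" for \<sigma>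
  proof -
    have "(\<Sum>e\<in>E. S \<sigma> e) = (\<Sum>e\<in>E. S \<sigma> e0)"
      by (intro sum.cong refl) (metis symS[OF that e0E])
    then have "Z \<sigma> * real (card E) = (\<Sum>e\<in>E. S \<sigma> e)"
      unfolding Z_def by simp
    also have "\<dots> = (\<Sum>d\<in>Asig Ns s K \<sigma>. g d)" unfolding S_def by (rule grp[OF that])
    finally show ?thesis .
  qed
  have swap: "(\<Sum>\<sigma>\<in>I. \<Sum>d\<in>Asig Ns s K \<sigma>. h d) = (\<Sum>d\<in>D. h d * real (mlt s K d))" for h :: "_ \<Rightarrow> real"
  proof -
    have "(\<Sum>\<sigma>\<in>I. \<Sum>d\<in>Asig Ns s K \<sigma>. h d) = (\<Sum>\<sigma>\<in>I. \<Sum>d\<in>D. if inj_on (hres s \<sigma> d) {..<s} then h d else 0)"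
      unfolding Asig_def D_def by (auto intro!: sum.cong simp: sum.inter_filter[symmetric] finD[unfolded D_def])
    also have "\<dots> = (\<Sum>d\<in>D. \<Sum>\<sigma>\<in>I. if inj_on (hres s \<sigma> d) {..<s} then h d else 0)" by (rule sum.swap)
    also have "\<dots> = (\<Sum>d\<in>D. h d * real (mlt s K d))"
    proof (rule sum.cong[OF refl])
      fix d
      have "(\<Sum>\<sigma>\<in>I. if inj_on (hres s \<sigma> d) {..<s} then h d else 0) = (\<Sum>\<sigma>\<in>{\<sigma>\<in>I. inj_on (hres s \<sigma> d) {..<s}}. h d)"
        using sum.inter_filter[OF finI, of "\<lambda>_. h d" "\<lambda>\<sigma>. inj_on (hres s \<sigma> d) {..<s}"] by simp
      then show "(\<Sum>\<sigma>\<in>I. if inj_on (hres s \<sigma> d) {..<s} then h d else 0) = h d * real (mlt s K d)"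
        unfolding mlt_def I_def by simp
    qed
    finally show ?thesis .
  qed
  have gm: "g d * real (mlt s K d) = (if mlt s K d > 0 then 1 else 0)" for d
    unfolding g_def by auto
  define X where "X = (\<Sum>\<sigma>\<in>I. Z \<sigma> * a \<sigma>)"
  define Y where "Y = (\<Sum>\<sigma>\<in>I. Z \<sigma> * real (card E))"
  have X1: "X \<le> (\<Sum>d\<in>D. Lr d)"
  proof -
    have "X \<le> (\<Sum>\<sigma>\<in>I. \<Sum>d\<in>Asig Ns s K \<sigma>. g d * Lr d)" unfolding X_def by (rule sum_mono) (rule i)
    also have "\<dots> = (\<Sum>d\<in>D. g d * Lr d * real (mlt s K d))" by (rule swap)
    also have "\<dots> \<le> (\<Sum>d\<in>D. Lr d)"
    proof (rule sum_mono)
      fix d assume "d \<in> D"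
      then have "Lr d \<ge> 0" using Lnn D_def by auto
      then show "g d * Lr d * real (mlt s K d) \<le> Lr d"
      proof -
        have "g d * Lr d * real (mlt s K d) = Lr d * (g d * real (mlt s K d))" by simp
        also have "\<dots> = Lr d * (if mlt s K d > 0 then 1 else 0)" by (simp only: gm)
        finally have eq: "g d * Lr d * real (mlt s K d) = Lr d * (if mlt s K d > 0 then 1 else 0)" .
        have "Lr d * (if mlt s K d > 0 then 1 else 0) \<le> Lr d" using \<open>Lr d \<ge> 0\<close> by simp
        then show ?thesis using eq by linarith
      qed
    qed
    finally show ?thesis .
  qed
  have Yeq: "Y = (\<Sum>d\<in>D. g d * real (mlt s K d))"
    unfolding Y_def using ii swap by simp
  have Y1: "Y \<ge> real (card {d \<in> D. nd K d \<ge> s})"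
  proof -
    have "Y = (\<Sum>d\<in>D. if mlt s K d > 0 then 1 else 0)" using Yeq gm by simp
    also have "\<dots> = real (card {d\<in>D. mlt s K d > 0})" using sum.inter_filter[OF finD, of "\<lambda>_. (1::real)" "\<lambda>d. mlt s K d > 0"] by simp
    also have "\<dots> \<ge> real (card {d \<in> D. nd K d \<ge> s})"
    proof -
      have "{d \<in> D. nd K d \<ge> s} \<subseteq> {d\<in>D. mlt s K d > 0}"
      proof
        fix d assume d: "d \<in> {d \<in> D. nd K d \<ge> s}"
        then obtain \<sigma> where "\<sigma> \<in> Injs s K" "inj_on (hres s \<sigma> d) {..<s}" using nd_inj unfolding D_def by blast
        then have "\<sigma> \<in> I" "d \<in> Asig Ns s K \<sigma>" using d unfolding I_def Asig_def D_def by auto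
        then show "d \<in> {d\<in>D. mlt s K d > 0}" using mpos d by auto
      qed
      then show ?thesis by (simp add: card_mono finD)
    qed
    finally show ?thesis .
  qed
  have Cpos: "real (card {d \<in> D. nd K d \<ge> s}) > 0" using cpos D_def by simp
  have Inot: "I \<noteq> {}"
  proof
    assume "I = {}" then have "Y = 0" unfolding Y_def by simp
    then show False using Y1 Cpos by simp
  qed
  have cE: "real (card E) > 0" using e0E finE card_gt_0_iff by auto
  have Zpos: "Z \<sigma> > 0" if "\<sigma> \<in> I" for \<sigma> unfolding Z_def using Spos[OF that e0E] .
  obtain \<sigma> where \<sigma>: "\<sigma> \<in> I" "a \<sigma> * Y \<le> real (card E) * X"
  proof (rule ccontr)
    assume "\<not> thesis"
    then have lt: "\<forall>\<sigma>\<in>I. real (card E) * X < a \<sigma> * Y" using that by force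
    have "(\<Sum>\<sigma>\<in>I. Z \<sigma> * (real (card E) * X)) < (\<Sum>\<sigma>\<in>I. Z \<sigma> * (a \<sigma> * Y))"
      by (rule sum_strict_mono[OF finI Inot]) (use lt Zpos in auto)
    also have "\<dots> = X * Y" unfolding X_def by (simp add: sum_distrib_right mult.assoc)
    also have "(\<Sum>\<sigma>\<in>I. Z \<sigma> * (real (card E) * X)) = Y * X" unfolding Y_def by (simp add: sum_distrib_right mult.assoc)
    finally show False by simp
  qed
  have Xnn: "X \<ge> 0" unfolding X_def a_def
  proof (rule sum_nonneg)
    fix \<sigma> assume s: "\<sigma> \<in> I"
    have "(\<Sum>e\<in>E. Lr (c \<sigma> e)) \<ge> 0"
    proof (rule sum_nonneg)
      fix e assume "e \<in> E"
      then have "c \<sigma> e \<in> D" using c[OF s] fibD by blast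
      then show "Lr (c \<sigma> e) \<ge> 0" using Lnn D_def by auto
    qed
    then show "0 \<le> Z \<sigma> * (\<Sum>e\<in>E. Lr (c \<sigma> e))" using Zpos[OF s] by simp
  qed
  have Ypos: "Y > 0" using Y1 Cpos by linarith
  have "a \<sigma> / real (card E) \<le> X / Y"
    using \<sigma>(2) cE Ypos by (simp add: divide_simps mult.commute)
  also have "\<dots> \<le> X / real (card {d \<in> D. nd K d \<ge> s})"
    using Y1 Cpos Xnn by (simp add: frac_le)
  also have "\<dots> \<le> (\<Sum>d\<in>D. Lr d) / real (card {d \<in> D. nd K d \<ge> s})"
    using X1 Cpos by (simp add: divide_right_mono)
  finally have fin_ineq: "a \<sigma> / real (card E) \<le> (\<Sum>d\<in>D. Lr d) / real (card {d \<in> D. nd K d \<ge> s})" .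
  have cprop: "\<forall>e\<in>E. c \<sigma> e \<in> D \<and> (\<forall>j<s. c \<sigma> e (\<sigma> j) = e j)"
  proof
    fix e assume e: "e \<in> E"
    have cf: "c \<sigma> e \<in> fib \<sigma> e" using c[OF \<sigma>(1) e] by simp
    then have h: "hres s \<sigma> (c \<sigma> e) = e" unfolding fib_def by simp
    show "c \<sigma> e \<in> D \<and> (\<forall>j<s. c \<sigma> e (\<sigma> j) = e j)"
    proof
      show "c \<sigma> e \<in> D" using cf fibD by auto
      show "\<forall>j<s. c \<sigma> e (\<sigma> j) = e j"
      proof (intro allI impI)
        fix j assume "j < s"
        then show "c \<sigma> e (\<sigma> j) = e j" using fun_cong[OF h, of j] by (simp add: hres_def)
      qed
    qed
  qed
  show ?thesis
    using \<sigma>(1) cprop fin_ineq unfolding I_def E_def D_def a_def by blast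
qed



lemma len_concat_const: "(\<forall>x\<in>set xs. length x = F) \<Longrightarrow> length (concat xs) = length xs * F"
  by (induction xs) auto

lemma fin_files: "finite Ns \<Longrightarrow> finite (files_space Ns F)"
proof -
  assume fin: "finite Ns"
  have "finite {xs :: bool list. set xs \<subseteq> UNIV \<and> length xs = F}"
    by (rule finite_lists_length_eq) simp
  then have "finite {xs :: bool list. length xs = F}" by simp
  then show ?thesis unfolding files_space_def using fin by (simp add: finite_PiE)
qed

lemma ach_nonneg:
  assumes "achievable M Ns K D R"
  shows "R \<ge> 0"
proof (rule ccontr)
  assume "\<not> R \<ge> 0"
  then have eps: "-R/2 > 0" by simp
  obtain F0 where F0: "\<forall>F\<ge>F0. \<exists>\<phi> \<psi> L \<mu>. good_scheme M Ns K D F \<phi> \<psi> L \<mu> (-R/2) (R + -R/2)"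
    using assms eps unfolding achievable_def by blast
  then obtain \<phi> \<psi> L \<mu> where g: "good_scheme M Ns K D F0 \<phi> \<psi> L \<mu> (-R/2) (R + -R/2)" by blast
  then have le: "(\<Sum>d\<in>D. real (L d) / real F0) / real (card D) \<le> R + -R/2" unfolding good_scheme_def by blast
  have "(\<Sum>d\<in>D. real (L d) / real F0) / real (card D) \<ge> 0"
    by (intro divide_nonneg_nonneg sum_nonneg) auto
  then show False using le \<open>\<not> R \<ge> 0\<close> by linarith
qed

lemma achK:
  assumes M: "M \<ge> 0" and D: "D \<subseteq> demands Ns K"
  shows "achievable M Ns K D (real K)"
  unfolding achievable_def
proof (intro allI impI)
  fix eps :: real assume eps: "eps > 0"
  show "\<exists>F0. \<forall>F\<ge>F0. \<exists>\<phi> \<psi> L \<mu>. good_scheme M Ns K D F \<phi> \<psi> L \<mu> eps (real K + eps)"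
  proof (rule exI[of _ 0], intro allI impI)
    fix F :: nat
    define \<phi> where "\<phi> = (\<lambda>(k::nat) (W::nat \<Rightarrow> bool list). ([] :: bool list))"
    define \<psi> where "\<psi> = (\<lambda>(d::nat \<Rightarrow> nat) (W::nat \<Rightarrow> bool list). concat (map (\<lambda>k. W (d k)) [0..<K]))"
    define L where "L = (\<lambda>d::nat \<Rightarrow> nat. K * F)"
    define \<mu> where "\<mu> = (\<lambda>(k::nat) (d::nat \<Rightarrow> nat) (X::bool list) (Z::bool list). take F (drop (k*F) X))"
    have lenW: "\<forall>x\<in>set (map (\<lambda>k. W (d k)) [0..<K]). length x = F"
      if "W \<in> files_space Ns F" "d \<in> D" for W d
    proof
      fix x assume "x \<in> set (map (\<lambda>k. W (d k)) [0..<K])"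
      then obtain k where k: "k < K" "x = W (d k)" by auto
      have "d k \<in> Ns" using D that(2) k(1) unfolding demands_def by (auto dest: PiE_mem)
      then show "length x = F" using that(1) k(2) unfolding files_space_def by (auto dest: PiE_mem)
    qed
    have err: "error_prob Ns K F \<phi> \<psi> \<mu> d = 0" if d: "d \<in> D" for d
    proof -
      have all: "\<mu> k d (\<psi> d W) (\<phi> k W) = W (d k)" if W: "W \<in> files_space Ns F" and k: "k < K" for W k
      proof -
        have "\<mu> k d (\<psi> d W) (\<phi> k W) = map (\<lambda>k. W (d k)) [0..<K] ! k"
          unfolding \<mu>_def \<psi>_def by (rule take_drop_concat[OF lenW[OF W d]]) (simp add: k)
        also have "\<dots> = W (d k)" using k by simp
        finally show ?thesis .
      qed
      have emp: "{W \<in> files_space Ns F. \<exists>k<K. \<mu> k d (\<psi> d W) (\<phi> k W) \<noteq> W (d k)} = {}"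
        using all by auto
      show ?thesis unfolding error_prob_def emp by simp
    qed
    have avg: "(\<Sum>d\<in>D. real (L d) / real F) / real (card D) \<le> real K + eps"
    proof -
      have "(\<Sum>d\<in>D. real (L d) / real F) \<le> (\<Sum>d\<in>D. real K)"
        by (rule sum_mono) (auto simp: L_def)
      also have "\<dots> = real (card D) * real K" by simp
      finally have "(\<Sum>d\<in>D. real (L d) / real F) / real (card D) \<le> real K"
        by (cases "card D = 0") (auto simp: divide_simps mult.commute)
      then show ?thesis using eps by simp
    qed
    have "good_scheme M Ns K D F \<phi> \<psi> L \<mu> eps (real K + eps)"
      unfolding good_scheme_def
    proof (intro conjI ballI allI impI)
      fix k W show "real (length (\<phi> k W)) \<le> M * real F" using M by (simp add: \<phi>_def)
    next
      fix d W assume "d \<in> D" "W \<in> files_space Ns F"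
      then show "length (\<psi> d W) \<le> L d"
        unfolding \<psi>_def L_def using len_concat_const[OF lenW] by simp
    next
      fix d assume "d \<in> D" then show "error_prob Ns K F \<phi> \<psi> \<mu> d \<le> eps" using err eps by simp
    next
      show "(\<Sum>d\<in>D. real (L d) / real F) / real (card D) \<le> real K + eps" by (rule avg)
    qed
    then show "\<exists>\<phi> \<psi> L \<mu>. good_scheme M Ns K D F \<phi> \<psi> L \<mu> eps (real K + eps)" by blast
  qed
qed

lemma Es_eq: "{d \<in> demands Ns s. nd s d = s} = Es Ns s"
  unfolding Es_def nd_def using inj_on_iff_eq_card[of "{..<s}"] by auto



lemma transfer:
  fixes N K s :: nat and R P :: real
  assumes fin: "finite Ns" and s1: "1 \<le> s" and sK: "s \<le> K"
    and e0: "e0 \<in> Es Ns s"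
    and cpos: "card {d \<in> demands Ns K. nd K d \<ge> s} > 0"
    and Pdef: "P = real (card {d \<in> demands Ns K. nd K d \<ge> s}) / real (card (demands Ns K))"
    and P1: "P \<le> 1" and Ppos: "P > 0"
    and ach: "achievable M Ns K (demands Ns K) R"
  shows "achievable M Ns s (Es Ns s) (R / P)"
  unfolding achievable_def
proof (intro allI impI)
  fix eps' :: real assume eps': "eps' > 0"
  define eps where "eps = eps' * P"
  have eps: "eps > 0" using eps' Ppos by (simp add: eps_def)
  have epsle: "eps \<le> eps'" using eps' P1 Ppos by (simp add: eps_def mult_left_le)
  obtain F0 where F0: "\<forall>F\<ge>F0. \<exists>\<phi> \<psi> L \<mu>. good_scheme M Ns K (demands Ns K) F \<phi> \<psi> L \<mu> eps (R + eps)"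
    using ach eps unfolding achievable_def by blast
  show "\<exists>F0. \<forall>F\<ge>F0. \<exists>\<phi> \<psi> L \<mu>. good_scheme M Ns s (Es Ns s) F \<phi> \<psi> L \<mu> eps' (R / P + eps')"
  proof (rule exI[of _ F0], intro allI impI)
    fix F :: nat assume "F \<ge> F0"
    then obtain \<phi> \<psi> L \<mu> where g: "good_scheme M Ns K (demands Ns K) F \<phi> \<psi> L \<mu> eps (R + eps)"
      using F0 by blast
    define D where "D = demands Ns K"
    define C where "C = card {d \<in> D. nd K d \<ge> s}"
    define Lr where "Lr d = real (L d) / real F" for d
    have Lnn: "\<forall>d\<in>demands Ns K. Lr d \<ge> 0" unfolding Lr_def by simp
    obtain \<sigma> c where \<sigma>: "\<sigma> \<in> Injs s K"
      and c: "\<forall>e\<in>Es Ns s. c e \<in> demands Ns K \<and> (\<forall>j<s. c e (\<sigma> j) = e j)"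
      and ineq: "(\<Sum>e\<in>Es Ns s. Lr (c e)) / real (card (Es Ns s))
          \<le> (\<Sum>d\<in>demands Ns K. Lr d) / real (card {d \<in> demands Ns K. nd K d \<ge> s})"
      using core[OF fin s1 sK e0 Lnn cpos] by blast
    have \<sigma>K: "\<sigma> j < K" if "j < s" for j using \<sigma> that unfolding Injs_def by auto
    define \<phi>s where "\<phi>s = (\<lambda>j W. \<phi> (\<sigma> j) W)"
    define \<psi>s where "\<psi>s = (\<lambda>e W. \<psi> (c e) W)"
    define Ls where "Ls = (\<lambda>e. L (c e))"
    define \<mu>s where "\<mu>s = (\<lambda>j e X Z. \<mu> (\<sigma> j) (c e) X Z)"
    have g1: "\<forall>k<K. \<forall>W\<in>files_space Ns F. real (length (\<phi> k W)) \<le> M * real F"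
      and g2: "\<forall>d\<in>D. \<forall>W\<in>files_space Ns F. length (\<psi> d W) \<le> L d"
      and g3: "\<forall>d\<in>D. error_prob Ns K F \<phi> \<psi> \<mu> d \<le> eps"
      and g4: "(\<Sum>d\<in>D. real (L d) / real F) / real (card D) \<le> R + eps"
      using g unfolding good_scheme_def D_def by blast+
    have finF: "finite (files_space Ns F)" by (rule fin_files[OF fin])
    have "good_scheme M Ns s (Es Ns s) F \<phi>s \<psi>s Ls \<mu>s eps' (R / P + eps')"
      unfolding good_scheme_def
    proof (intro conjI ballI allI impI)
      fix k W assume "k < s" "W \<in> files_space Ns F"
      then show "real (length (\<phi>s k W)) \<le> M * real F" using g1 \<sigma>K unfolding \<phi>s_def by blast
    next
      fix e W assume "e \<in> Es Ns s" "W \<in> files_space Ns F"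
      then show "length (\<psi>s e W) \<le> Ls e" using g2 c unfolding \<psi>s_def Ls_def D_def by blast
    next
      fix e assume e: "e \<in> Es Ns s"
      have ce: "c e \<in> D" "\<forall>j<s. c e (\<sigma> j) = e j" using c e D_def by auto
      have sub: "{W \<in> files_space Ns F. \<exists>k<s. \<mu>s k e (\<psi>s e W) (\<phi>s k W) \<noteq> W (e k)}
          \<subseteq> {W \<in> files_space Ns F. \<exists>k<K. \<mu> k (c e) (\<psi> (c e) W) (\<phi> k W) \<noteq> W (c e k)}"
      proof
        fix W assume "W \<in> {W \<in> files_space Ns F. \<exists>k<s. \<mu>s k e (\<psi>s e W) (\<phi>s k W) \<noteq> W (e k)}"
        then obtain k where W: "W \<in> files_space Ns F" and k: "k < s"
          and ne: "\<mu> (\<sigma> k) (c e) (\<psi> (c e) W) (\<phi> (\<sigma> k) W) \<noteq> W (e k)"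
          unfolding \<mu>s_def \<psi>s_def \<phi>s_def by blast
        have "W (e k) = W (c e (\<sigma> k))" using ce(2) k by simp
        then show "W \<in> {W \<in> files_space Ns F. \<exists>k<K. \<mu> k (c e) (\<psi> (c e) W) (\<phi> k W) \<noteq> W (c e k)}"
          using W ne \<sigma>K[OF k] by auto
      qed
      have "error_prob Ns s F \<phi>s \<psi>s \<mu>s e \<le> error_prob Ns K F \<phi> \<psi> \<mu> (c e)"
        unfolding error_prob_def
        by (rule divide_right_mono) (use card_mono[OF _ sub] finF in auto)
      also have "\<dots> \<le> eps" using g3 ce(1) by blast
      finally show "error_prob Ns s F \<phi>s \<psi>s \<mu>s e \<le> eps'" using epsle by simp
    next
      have cD: "real (card D) > 0"
      proof -
        have "C \<le> card D" unfolding C_def using fin_dem[OF fin] D_def by (simp add: card_mono)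
        then show ?thesis using cpos unfolding C_def D_def by simp
      qed
      have PC: "P = real C / real (card D)" using Pdef unfolding C_def D_def by simp
      have "(\<Sum>e\<in>Es Ns s. real (Ls e) / real F) / real (card (Es Ns s))
           \<le> (\<Sum>d\<in>D. Lr d) / real C"
        using ineq unfolding Ls_def Lr_def C_def D_def by simp
      also have "\<dots> = ((\<Sum>d\<in>D. Lr d) / real (card D)) / P"
      proof -
        have Cr: "real C > 0" using cpos unfolding C_def D_def by simp
        show ?thesis unfolding PC using cD Cr by (simp add: field_simps)
      qed
      also have "\<dots> \<le> (R + eps) / P"
        using divide_right_mono[OF g4, of P] Ppos unfolding Lr_def by simp
      also have "\<dots> = R / P + eps'" using Ppos by (simp add: eps_def add_divide_distrib)
      finally show "(\<Sum>e\<in>Es Ns s. real (Ls e) / real F) / real (card (Es Ns s)) \<le> R / P + eps'" .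
    qed
    then show "\<exists>\<phi> \<psi> L \<mu>. good_scheme M Ns s (Es Ns s) F \<phi> \<psi> L \<mu> eps' (R / P + eps')" by blast
  qed
qed

theorem lemma1:
  fixes M :: real and N K s :: nat
  assumes "K \<ge> 1" and "M \<ge> 0" and "1 \<le> s" and "s \<le> min N K"
  shows "Rbar M {1..N} K \<ge>
           (real (card {d \<in> demands {1..N} K. nd K d \<ge> s}) / real (card (demands {1..N} K)))
           * Rbar_s M {1..N} s s"
proof -
  define Ns where "Ns = {1..N}"
  define D where "D = demands Ns K"
  define C where "C = card {d \<in> D. nd K d \<ge> s}"
  define P where "P = real C / real (card D)"
  have fin: "finite Ns" unfolding Ns_def by simp
  have sK: "s \<le> K" and sN: "s \<le> N" using assms by auto
  have finD: "finite D" using fin_dem[OF fin] D_def by simp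
  define e0 where "e0 = (\<lambda>j\<in>{..<s}. Suc j)"
  have e0: "e0 \<in> Es Ns s"
  proof -
    have "e0 \<in> {..<s} \<rightarrow>\<^sub>E Ns" unfolding e0_def Ns_def using sN by (auto simp: restrict_PiE_iff)
    moreover have "inj_on e0 {..<s}" unfolding e0_def by (auto simp: inj_on_def)
    ultimately show ?thesis unfolding Es_def demands_def by simp
  qed
  define dd where "dd = (\<lambda>k\<in>{..<K}. if k < s then Suc k else 1)"
  have ddD: "dd \<in> D"
    unfolding dd_def D_def demands_def Ns_def using sN assms(3) by (auto simp: restrict_PiE_iff)
  have "{1..s} \<subseteq> dd ` {..<K}"
  proof
    fix j assume j: "j \<in> {1..s}"
    then have "j - 1 < K" "j - 1 < s" "j = Suc (j - 1)" using sK by auto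
    then have "dd (j - 1) = j" unfolding dd_def by simp
    then show "j \<in> dd ` {..<K}" using \<open>j - 1 < K\<close> by (metis lessThan_iff image_eqI)
  qed
  then have "card {1..s} \<le> card (dd ` {..<K})" by (intro card_mono) simp_all
  then have "s \<le> nd K dd" unfolding nd_def by simp
  then have ddm: "dd \<in> {d \<in> D. nd K d \<ge> s}" using ddD by simp
  have "finite {d \<in> D. nd K d \<ge> s}" using finD by simp
  then have Cpos: "C > 0" unfolding C_def using ddm card_gt_0_iff by blast
  have CD: "C \<le> card D" unfolding C_def using finD by (simp add: card_mono)
  have Ppos: "P > 0" unfolding P_def using Cpos CD by simp
  have P1: "P \<le> 1" unfolding P_def using CD by (cases "card D = 0") (auto simp: divide_le_eq_1)
  define SK where "SK = {R. achievable M Ns K D R}"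
  define Ss where "Ss = {R. achievable M Ns s (Es Ns s) R}"
  have RK: "Rbar M {1..N} K = Inf SK" unfolding Rbar_def opt_rate_def SK_def Ns_def D_def by simp
  have RS: "Rbar_s M {1..N} s s = Inf Ss" unfolding Rbar_s_def opt_rate_def Ss_def Ns_def using Es_eq by simp
  have SKne: "SK \<noteq> {}" using achK[OF assms(2), of D Ns K] unfolding SK_def D_def by auto
  have bdd: "bdd_below Ss" unfolding Ss_def by (rule bdd_belowI[of _ 0]) (auto dest: ach_nonneg)
  have "\<forall>R\<in>SK. P * Inf Ss \<le> R"
  proof
    fix R assume "R \<in> SK"
    then have aR: "achievable M Ns K (demands Ns K) R" unfolding SK_def D_def by simp
    have Cp: "card {d \<in> demands Ns K. nd K d \<ge> s} > 0" using Cpos unfolding C_def D_def by simp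
    have Pd: "P = real (card {d \<in> demands Ns K. nd K d \<ge> s}) / real (card (demands Ns K))"
      unfolding P_def C_def D_def by simp
    have "achievable M Ns s (Es Ns s) (R / P)"
      by (rule transfer[OF fin assms(3) sK e0 Cp Pd P1 Ppos aR])
    then have "R / P \<in> Ss" unfolding Ss_def by simp
    then have "Inf Ss \<le> R / P" using bdd by (rule cInf_lower)
    then show "P * Inf Ss \<le> R" using Ppos by (simp add: field_simps)
  qed
  then have "P * Inf Ss \<le> Inf SK" using SKne by (intro cInf_greatest) auto
  then show ?thesis unfolding RK RS P_def C_def D_def Ns_def by simp
qed


end
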